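(* Let $B$ be a Horn program, $E^+,E^-$ finite sets of ground atoms, and $H,H'\in\mathcal{H}_{D,C}$ hypotheses with $H'$ a generalization of $H$. If $size(H') > fn(H,B,E^+) + size(H)$, then $S_{MDL}(H,B,E^+,E^-) > S_{MDL}(H',B,E^+,E^-)$.
   Context: A definite clause is a clause with exactly one positive literal. A hypothesis is a finite set of definite clauses; $\mathcal{H}_{D,C}$ denotes the hypothesis space of hypotheses consistent with a declaration bias $D$ and hypothesis constraints $C$ (only membership matters). $size(H)$ is the total number of literals in $H$. $B$ is background knowledge, $E^+$ positive and $E^-$ negative examples. For a hypothesis $H$: $tp(H,B,E^+)=|\{e\in E^+ : H\cup B\models e\}|$, $tn(H,B,E^-)=|\{e\in E^- : H\cup B\not\models e\}|$, $fn(H,B,E^+)=|E^+|-tp(H,B,E^+)$, and $S_{MDL}(H,B,E^+,E^-)=tp(H,B,E^+)+tn(H,B,E^-)-size(H)$. A clause $C_1$ subsumes a clause $C_2$ iff there is a substitution $\theta$ with $C_1\theta\subseteq C_2$. A clausal theory $T_1$ subsumes $T_2$ ($T_1\preceq T_2$) iff every clause of $T_2$ is subsumed by some clause of $T_1$. $T_1$ is a generalization of $T_2$ iff $T_1\preceq T_2$, and a specialization of $T_2$ iff $T_2\preceq T_1$. *)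

theory Defs
  imports Main
begin

datatype ('f, 'v) fterm = Var 'v | Fn 'f "('f, 'v) fterm list"

type_synonym ('p, 'f, 'v) atom = "'p \<times> ('f, 'v) fterm list"

datatype ('p, 'f, 'v) literal = Pos "('p, 'f, 'v) atom" | Neg "('p, 'f, 'v) atom"

text \<open>A clause is a finite set of literals (a disjunction, variables implicitly
  universally quantified).\<close>
type_synonym ('p, 'f, 'v) clause = "('p, 'f, 'v) literal set"

fun vars_term :: "('f, 'v) fterm \<Rightarrow> 'v set" where
  "vars_term (Var x) = {x}"
| "vars_term (Fn f ts) = (\<Union>t \<in> set ts. vars_term t)"

definition ground_term :: "('f, 'v) fterm \<Rightarrow> bool" where
  "ground_term t \<longleftrightarrow> vars_term t = {}"

definition ground_atom :: "('p, 'f, 'v) atom \<Rightarrow> bool" where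
  "ground_atom a \<longleftrightarrow> (\<forall>t \<in> set (snd a). ground_term t)"

fun subst_term :: "('v \<Rightarrow> ('f, 'v) fterm) \<Rightarrow> ('f, 'v) fterm \<Rightarrow> ('f, 'v) fterm" where
  "subst_term \<sigma> (Var x) = \<sigma> x"
| "subst_term \<sigma> (Fn f ts) = Fn f (map (subst_term \<sigma>) ts)"

definition subst_atom :: "('v \<Rightarrow> ('f, 'v) fterm) \<Rightarrow> ('p, 'f, 'v) atom \<Rightarrow> ('p, 'f, 'v) atom" where
  "subst_atom \<sigma> a = (fst a, map (subst_term \<sigma>) (snd a))"

fun subst_lit :: "('v \<Rightarrow> ('f, 'v) fterm) \<Rightarrow> ('p, 'f, 'v) literal \<Rightarrow> ('p, 'f, 'v) literal" where
  "subst_lit \<sigma> (Pos a) = Pos (subst_atom \<sigma> a)"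
| "subst_lit \<sigma> (Neg a) = Neg (subst_atom \<sigma> a)"

definition subst_clause :: "('v \<Rightarrow> ('f, 'v) fterm) \<Rightarrow> ('p, 'f, 'v) clause \<Rightarrow> ('p, 'f, 'v) clause" where
  "subst_clause \<sigma> C = subst_lit \<sigma> ` C"

definition pos_lits :: "('p, 'f, 'v) clause \<Rightarrow> ('p, 'f, 'v) literal set" where
  "pos_lits C = {l \<in> C. \<exists>a. l = Pos a}"

definition definite_clause :: "('p, 'f, 'v) clause \<Rightarrow> bool" where
  "definite_clause C \<longleftrightarrow> finite C \<and> card (pos_lits C) = 1"

definition horn_clause :: "('p, 'f, 'v) clause \<Rightarrow> bool" where
  "horn_clause C \<longleftrightarrow> finite C \<and> card (pos_lits C) \<le> 1"

definition horn_program :: "('p, 'f, 'v) clause set \<Rightarrow> bool" where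
  "horn_program B \<longleftrightarrow> finite B \<and> (\<forall>C \<in> B. horn_clause C)"

definition hypothesis :: "('p, 'f, 'v) clause set \<Rightarrow> bool" where
  "hypothesis H \<longleftrightarrow> finite H \<and> (\<forall>C \<in> H. definite_clause C)"

definition hsize :: "('p, 'f, 'v) clause set \<Rightarrow> nat" where
  "hsize H = (\<Sum>C \<in> H. card C)"

text \<open>A Herbrand interpretation is a set of ground atoms.  A clause is true in
  I iff each of its ground instances contains a true literal.\<close>

definition ground_subst :: "('v \<Rightarrow> ('f, 'v) fterm) \<Rightarrow> bool" where
  "ground_subst \<sigma> \<longleftrightarrow> (\<forall>x. ground_term (\<sigma> x))"

fun lit_true :: "('p, 'f, 'v) atom set \<Rightarrow> ('p, 'f, 'v) literal \<Rightarrow> bool" where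
  "lit_true I (Pos a) \<longleftrightarrow> a \<in> I"
| "lit_true I (Neg a) \<longleftrightarrow> a \<notin> I"

definition clause_true :: "('p, 'f, 'v) atom set \<Rightarrow> ('p, 'f, 'v) clause \<Rightarrow> bool" where
  "clause_true I C \<longleftrightarrow> (\<forall>\<sigma>. ground_subst \<sigma> \<longrightarrow> (\<exists>l \<in> C. lit_true I (subst_lit \<sigma> l)))"

definition herbrand_interp :: "('p, 'f, 'v) atom set \<Rightarrow> bool" where
  "herbrand_interp I \<longleftrightarrow> (\<forall>a \<in> I. ground_atom a)"

definition is_model :: "('p, 'f, 'v) atom set \<Rightarrow> ('p, 'f, 'v) clause set \<Rightarrow> bool" where
  "is_model I T \<longleftrightarrow> herbrand_interp I \<and> (\<forall>C \<in> T. clause_true I C)"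

definition entails :: "('p, 'f, 'v) clause set \<Rightarrow> ('p, 'f, 'v) atom \<Rightarrow> bool" where
  "entails T e \<longleftrightarrow> (\<forall>I. is_model I T \<longrightarrow> clause_true I {Pos e})"

definition subsumes :: "('p, 'f, 'v) clause \<Rightarrow> ('p, 'f, 'v) clause \<Rightarrow> bool" where
  "subsumes C1 C2 \<longleftrightarrow> (\<exists>\<theta>. subst_clause \<theta> C1 \<subseteq> C2)"

definition theory_subsumes :: "('p, 'f, 'v) clause set \<Rightarrow> ('p, 'f, 'v) clause set \<Rightarrow> bool" where
  "theory_subsumes T1 T2 \<longleftrightarrow> (\<forall>C2 \<in> T2. \<exists>C1 \<in> T1. subsumes C1 C2)"

definition generalization :: "('p, 'f, 'v) clause set \<Rightarrow> ('p, 'f, 'v) clause set \<Rightarrow> bool" where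
  "generalization T1 T2 \<longleftrightarrow> theory_subsumes T1 T2"

definition tp :: "('p, 'f, 'v) clause set \<Rightarrow> ('p, 'f, 'v) clause set \<Rightarrow> ('p, 'f, 'v) atom set \<Rightarrow> nat" where
  "tp H B Ep = card {e \<in> Ep. entails (H \<union> B) e}"

definition tn :: "('p, 'f, 'v) clause set \<Rightarrow> ('p, 'f, 'v) clause set \<Rightarrow> ('p, 'f, 'v) atom set \<Rightarrow> nat" where
  "tn H B En = card {e \<in> En. \<not> entails (H \<union> B) e}"

definition fn :: "('p, 'f, 'v) clause set \<Rightarrow> ('p, 'f, 'v) clause set \<Rightarrow> ('p, 'f, 'v) atom set \<Rightarrow> nat" where
  "fn H B Ep = card Ep - tp H B Ep"

definition S_MDL :: "('p, 'f, 'v) clause set \<Rightarrow> ('p, 'f, 'v) clause set \<Rightarrow> ('p, 'f, 'v) atom set \<Rightarrow> ('p, 'f, 'v) atom set \<Rightarrow> int" where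
  "S_MDL H B Ep En = int (tp H B Ep) + int (tn H B En) - int (hsize H)"

end

theory Submission
  imports Defs
begin

lemma subst_term_comp:
  "subst_term \<sigma> (subst_term \<theta> t) = subst_term (\<lambda>x. subst_term \<sigma> (\<theta> x)) t"
  by (induction t) auto

lemma subst_lit_comp:
  "subst_lit \<sigma> (subst_lit \<theta> l) = subst_lit (\<lambda>x. subst_term \<sigma> (\<theta> x)) l"
  by (cases l) (auto simp: subst_atom_def subst_term_comp comp_def)

lemma ground_subst_term:
  "ground_subst \<sigma> \<Longrightarrow> ground_term (subst_term \<sigma> t)"
  by (induction t) (auto simp: ground_subst_def ground_term_def)

lemma subsumes_true:
  fixes C1 C2 :: "('p,'f,'v) clause"
  assumes "subsumes C1 C2" "clause_true I C1"
  shows "clause_true I C2"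
  unfolding clause_true_def
proof (intro allI impI)
  fix \<sigma> :: "'v \<Rightarrow> ('f,'v) fterm" assume g: "ground_subst \<sigma>"
  obtain \<theta> where th: "subst_clause \<theta> C1 \<subseteq> C2" using assms(1) unfolding subsumes_def by blast
  have "ground_subst (\<lambda>x. subst_term \<sigma> (\<theta> x))"
    using g ground_subst_term by (auto simp: ground_subst_def)
  then obtain l where l: "l \<in> C1" "lit_true I (subst_lit (\<lambda>x. subst_term \<sigma> (\<theta> x)) l)"
    using assms(2) unfolding clause_true_def by blast
  have "subst_lit \<theta> l \<in> C2" using th l(1) by (auto simp: subst_clause_def)
  moreover have "lit_true I (subst_lit \<sigma> (subst_lit \<theta> l))" using l(2) by (simp add: subst_lit_comp)
  ultimately show "\<exists>l\<in>C2. lit_true I (subst_lit \<sigma> l)" by blast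
qed

lemma entails_mono:
  assumes "generalization H' H" "entails (H \<union> B) e"
  shows "entails (H' \<union> B) e"
  unfolding entails_def
proof (intro allI impI)
  fix I assume m: "is_model I (H' \<union> B)"
  have "is_model I (H \<union> B)"
    unfolding is_model_def
  proof (intro conjI ballI)
    show "herbrand_interp I" using m unfolding is_model_def by blast
    fix C assume "C \<in> H \<union> B"
    then show "clause_true I C"
    proof
      assume "C \<in> H"
      then obtain C1 where "C1 \<in> H'" "subsumes C1 C" using assms(1)
        by (auto simp: generalization_def theory_subsumes_def)
      then show ?thesis using m subsumes_true unfolding is_model_def by blast
    next
      assume "C \<in> B" then show ?thesis using m unfolding is_model_def by blast
    qed
  qed
  then show "clause_true I {Pos e}" using assms(2) unfolding entails_def by blast
qed

theorem proposition4p12: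
  fixes B H H' :: "('p, 'f, 'v) clause set"
    and Ep En :: "('p, 'f, 'v) atom set"
    and HDC :: "('p, 'f, 'v) clause set set"
  assumes "horn_program B"
    and "finite Ep" and "\<forall>e \<in> Ep. ground_atom e"
    and "finite En" and "\<forall>e \<in> En. ground_atom e"
    and "\<forall>X \<in> HDC. hypothesis X"
    and "H \<in> HDC" and "H' \<in> HDC"
    and "generalization H' H"
    and "hsize H' > fn H B Ep + hsize H"
  shows "S_MDL H B Ep En > S_MDL H' B Ep En"
proof -
  have tn: "tn H' B En \<le> tn H B En"
    unfolding tn_def
  proof (rule card_mono)
    show "finite {e \<in> En. \<not> entails (H \<union> B) e}" using assms(4) by simp
    show "{e \<in> En. \<not> entails (H' \<union> B) e} \<subseteq> {e \<in> En. \<not> entails (H \<union> B) e}"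
      using entails_mono[OF assms(9)] by blast
  qed
  have tp': "tp H' B Ep \<le> card Ep" unfolding tp_def
    by (rule card_mono) (use assms(2) in simp, blast)
  have tp: "tp H B Ep \<le> card Ep" unfolding tp_def
    by (rule card_mono) (use assms(2) in simp, blast)
  have "int (fn H B Ep) = int (card Ep) - int (tp H B Ep)" using tp by (simp add: fn_def)
  then show ?thesis using tn tp' assms(10) unfolding S_MDL_def by linarith
qed

end
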